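(* Let $G$ be a countable discrete group and let $\theta=(\{X_t\}_{t\in G},\{h_t\}_{t\in G})$ be a free topological partial action of $G$ on a $\sigma$-compact Hausdorff space $X$ such that every $X_t$ is $\sigma$-compact. Let $$R=\{(x,h_t(x)) : t\in G,\ x\in X_{t^{-1}}\}\subseteq X\times X,$$ equipped with the topology transported from the product topology of $X\times G$ ($G$ discrete) via the injective map $(x,h_t(x))\mapsto (x,t)$. Then $R$ is an equivalence relation on $X$, and with this topology it is an étale equivalence relation.
   Context: A topological partial action of $G$ on $X$ is a pair $(\{X_t\}_{t\in G},\{h_t\}_{t\in G})$ where each $X_t\subseteq X$ is open, each $h_t:X_{t^{-1}}\to X_t$ is a homeomorphism, and: (1) $X_e=X$ and $h_e=\mathrm{id}_X$; (2) $h_t(X_{t^{-1}}\cap X_s)=X_t\cap X_{ts}$ for all $s,t$; (3) $h_t(h_s(x))=h_{ts}(x)$ for $x\in X_{s^{-1}}\cap X_{s^{-1}t^{-1}}$. It is free if $h_t(x)=x$ for some $x\in X_{t^{-1}}$ implies $t=e$; freeness guarantees that for each $(x,y)\in R$ there is a unique $t$ with $y=h_t(x)$, so the map $(x,h_t(x))\mapsto(x,t)$ is injective. Thus a sequence $(x_n,h_{t_n}(x_n))$ converges to $(x,h_t(x))$ iff $x_n\to x$ in $X$ and $t_n=t$ eventually. An étale equivalence relation is an equivalence relation $R\subseteq X\times X$ with a topology such that $R$ is $\sigma$-compact, the diagonal $\{(x,x):x\in X\}$ is open in $R$, and every $(x,y)\in R$ has a neighbourhood $U$ in $R$ on which the range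 map $r(x,y)=x$ and the source map $s(x,y)=y$ restrict to homeomorphisms onto open subsets of $X$. *)

theory Defs
  imports "HOL-Analysis.Analysis" "HOL-Algebra.Group"
begin

definition sigma_compact_in :: "'a topology \<Rightarrow> 'a set \<Rightarrow> bool" where
  "sigma_compact_in T S \<longleftrightarrow>
     (\<exists>K :: nat \<Rightarrow> 'a set. (\<forall>n. compactin T (K n)) \<and> S = (\<Union>n. K n))"

definition topological_partial_action ::
  "('g, 'b) monoid_scheme \<Rightarrow> 'a topology \<Rightarrow> ('g \<Rightarrow> 'a set) \<Rightarrow> ('g \<Rightarrow> 'a \<Rightarrow> 'a) \<Rightarrow> bool" where
  "topological_partial_action G X Xs h \<longleftrightarrow>
     group G \<and>
     (\<forall>t\<in>carrier G. openin X (Xs t)) \<and>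
     (\<forall>t\<in>carrier G. homeomorphic_map (subtopology X (Xs (inv\<^bsub>G\<^esub> t))) (subtopology X (Xs t)) (h t)) \<and>
     Xs \<one>\<^bsub>G\<^esub> = topspace X \<and>
     (\<forall>x\<in>topspace X. h \<one>\<^bsub>G\<^esub> x = x) \<and>
     (\<forall>s\<in>carrier G. \<forall>t\<in>carrier G.
        h t ` (Xs (inv\<^bsub>G\<^esub> t) \<inter> Xs s) = Xs t \<inter> Xs (t \<otimes>\<^bsub>G\<^esub> s)) \<and>
     (\<forall>s\<in>carrier G. \<forall>t\<in>carrier G.
        \<forall>x \<in> Xs (inv\<^bsub>G\<^esub> s) \<inter> Xs (inv\<^bsub>G\<^esub> s \<otimes>\<^bsub>G\<^esub> inv\<^bsub>G\<^esub> t).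
          h t (h s x) = h (t \<otimes>\<^bsub>G\<^esub> s) x)"

definition free_partial_action ::
  "('g, 'b) monoid_scheme \<Rightarrow> ('g \<Rightarrow> 'a set) \<Rightarrow> ('g \<Rightarrow> 'a \<Rightarrow> 'a) \<Rightarrow> bool" where
  "free_partial_action G Xs h \<longleftrightarrow>
     (\<forall>t\<in>carrier G. \<forall>x\<in>Xs (inv\<^bsub>G\<^esub> t). h t x = x \<longrightarrow> t = \<one>\<^bsub>G\<^esub>)"

definition orbit_rel ::
  "('g, 'b) monoid_scheme \<Rightarrow> ('g \<Rightarrow> 'a set) \<Rightarrow> ('g \<Rightarrow> 'a \<Rightarrow> 'a) \<Rightarrow> ('a \<times> 'a) set" where
  "orbit_rel G Xs h = {(x, h t x) | t x. t \<in> carrier G \<and> x \<in> Xs (inv\<^bsub>G\<^esub> t)}"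

definition action_domain ::
  "('g, 'b) monoid_scheme \<Rightarrow> ('g \<Rightarrow> 'a set) \<Rightarrow> ('a \<times> 'g) set" where
  "action_domain G Xs = {(x, t). t \<in> carrier G \<and> x \<in> Xs (inv\<^bsub>G\<^esub> t)}"

definition orbit_rel_topology ::
  "('g, 'b) monoid_scheme \<Rightarrow> 'a topology \<Rightarrow> ('g \<Rightarrow> 'a set) \<Rightarrow> ('g \<Rightarrow> 'a \<Rightarrow> 'a) \<Rightarrow> ('a \<times> 'a) topology" where
  "orbit_rel_topology G X Xs h = topology (\<lambda>U.
      U \<subseteq> orbit_rel G Xs h \<and>
      openin (subtopology (prod_topology X (discrete_topology (carrier G))) (action_domain G Xs))
             {p \<in> action_domain G Xs. (fst p, h (snd p) (fst p)) \<in> U})"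

definition etale_equivalence_relation ::
  "'a topology \<Rightarrow> ('a \<times> 'a) set \<Rightarrow> ('a \<times> 'a) topology \<Rightarrow> bool" where
  "etale_equivalence_relation X R TR \<longleftrightarrow>
     equiv (topspace X) R \<and>
     topspace TR = R \<and>
     sigma_compact_in TR R \<and>
     openin TR {(x, x) | x. x \<in> topspace X} \<and>
     (\<forall>p\<in>R. \<exists>U. openin TR U \<and> p \<in> U \<and>
        openin X (fst ` U) \<and> homeomorphic_map (subtopology TR U) (subtopology X (fst ` U)) fst \<and>
        openin X (snd ` U) \<and> homeomorphic_map (subtopology TR U) (subtopology X (snd ` U)) snd)"

end

theory Submission imports Defs begin

locale PA =
  fixes G :: "('g, 'b) monoid_scheme" and X :: "'a topology"
    and Xs :: "'g \<Rightarrow> 'a set" and h :: "'g \<Rightarrow> 'a \<Rightarrow> 'a"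
  assumes grp: "group G" and tpa: "topological_partial_action G X Xs h"
    and fr: "free_partial_action G Xs h"
begin

lemma opn: "t \<in> carrier G \<Longrightarrow> openin X (Xs t)"
  using tpa unfolding topological_partial_action_def by blast
lemma sub: "t \<in> carrier G \<Longrightarrow> Xs t \<subseteq> topspace X"
  using opn openin_subset by blast
lemma hom: "t \<in> carrier G \<Longrightarrow> homeomorphic_map (subtopology X (Xs (inv\<^bsub>G\<^esub> t))) (subtopology X (Xs t)) (h t)"
  using tpa unfolding topological_partial_action_def by blast
lemma e1: "Xs \<one>\<^bsub>G\<^esub> = topspace X" "x \<in> topspace X \<Longrightarrow> h \<one>\<^bsub>G\<^esub> x = x"
  using tpa unfolding topological_partial_action_def by blast+
lemma ax2: "s \<in> carrier G \<Longrightarrow> t \<in> carrier G \<Longrightarrow>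
        h t ` (Xs (inv\<^bsub>G\<^esub> t) \<inter> Xs s) = Xs t \<inter> Xs (t \<otimes>\<^bsub>G\<^esub> s)"
  using tpa unfolding topological_partial_action_def by blast
lemma ax3: "s \<in> carrier G \<Longrightarrow> t \<in> carrier G \<Longrightarrow>
        x \<in> Xs (inv\<^bsub>G\<^esub> s) \<Longrightarrow> x \<in> Xs (inv\<^bsub>G\<^esub> s \<otimes>\<^bsub>G\<^esub> inv\<^bsub>G\<^esub> t) \<Longrightarrow>
          h t (h s x) = h (t \<otimes>\<^bsub>G\<^esub> s) x"
  using tpa unfolding topological_partial_action_def by blast

lemma img: "t \<in> carrier G \<Longrightarrow> h t ` Xs (inv\<^bsub>G\<^esub> t) = Xs t"
proof -
  assume t: "t \<in> carrier G"
  have "inv\<^bsub>G\<^esub> t \<in> carrier G" using grp t by simp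
  then show ?thesis using homeomorphic_imp_surjective_map[OF hom[OF t]] sub t
    by (simp add: Int_absorb1)
qed

lemma hin: "t \<in> carrier G \<Longrightarrow> x \<in> Xs (inv\<^bsub>G\<^esub> t) \<Longrightarrow> h t x \<in> Xs t"
  using img by blast

lemma comp: assumes s: "s \<in> carrier G" and t: "t \<in> carrier G" and x: "x \<in> Xs (inv\<^bsub>G\<^esub> t)"
  and y: "h t x \<in> Xs (inv\<^bsub>G\<^esub> s)"
  shows "x \<in> Xs (inv\<^bsub>G\<^esub> (s \<otimes>\<^bsub>G\<^esub> t))" "h s (h t x) = h (s \<otimes>\<^bsub>G\<^esub> t) x"
proof -
  have it: "inv\<^bsub>G\<^esub> t \<in> carrier G" "inv\<^bsub>G\<^esub> s \<in> carrier G" using group.inv_closed[OF grp] s t by auto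
  have iit: "inv\<^bsub>G\<^esub> (inv\<^bsub>G\<^esub> t) = t" using group.inv_inv[OF grp t] .
  have l: "inv\<^bsub>G\<^esub> t \<otimes>\<^bsub>G\<^esub> t = \<one>\<^bsub>G\<^esub>" using group.l_inv[OF grp t] .
  have xt: "x \<in> topspace X" using sub[OF it(1)] x by blast
  have bk: "h (inv\<^bsub>G\<^esub> t) (h t x) = x"
  proof -
    have "x \<in> Xs (inv\<^bsub>G\<^esub> t \<otimes>\<^bsub>G\<^esub> inv\<^bsub>G\<^esub> (inv\<^bsub>G\<^esub> t))"
      unfolding iit l e1(1) using xt .
    then have "h (inv\<^bsub>G\<^esub> t) (h t x) = h (inv\<^bsub>G\<^esub> t \<otimes>\<^bsub>G\<^esub> t) x"
      using ax3[OF t it(1) x] by simp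
    also have "\<dots> = x" unfolding l using e1(2)[OF xt] .
    finally show ?thesis .
  qed
  have "h t x \<in> Xs (inv\<^bsub>G\<^esub> (inv\<^bsub>G\<^esub> t)) \<inter> Xs (inv\<^bsub>G\<^esub> s)"
    unfolding iit using hin[OF t x] y by blast
  then have "h (inv\<^bsub>G\<^esub> t) (h t x) \<in> Xs (inv\<^bsub>G\<^esub> t) \<inter> Xs (inv\<^bsub>G\<^esub> t \<otimes>\<^bsub>G\<^esub> inv\<^bsub>G\<^esub> s)"
    using ax2[OF it(2) it(1)] by blast
  then have x2: "x \<in> Xs (inv\<^bsub>G\<^esub> t \<otimes>\<^bsub>G\<^esub> inv\<^bsub>G\<^esub> s)" using bk by simp
  then show "x \<in> Xs (inv\<^bsub>G\<^esub> (s \<otimes>\<^bsub>G\<^esub> t))" using group.inv_mult_group[OF grp s t] by simp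
  show "h s (h t x) = h (s \<otimes>\<^bsub>G\<^esub> t) x" using ax3[OF t s x x2] .
qed

lemma backe: assumes t: "t \<in> carrier G" and x: "x \<in> Xs (inv\<^bsub>G\<^esub> t)"
  shows "h (inv\<^bsub>G\<^esub> t) (h t x) = x"
proof -
  have it: "inv\<^bsub>G\<^esub> t \<in> carrier G" using group.inv_closed[OF grp] t by auto
  have l: "inv\<^bsub>G\<^esub> t \<otimes>\<^bsub>G\<^esub> t = \<one>\<^bsub>G\<^esub>" using group.l_inv[OF grp t] .
  have xt: "x \<in> topspace X" using sub[OF it] x by blast
  have "h t x \<in> Xs (inv\<^bsub>G\<^esub> (inv\<^bsub>G\<^esub> t))" using hin[OF t x] group.inv_inv[OF grp t] by simp
  then have "h (inv\<^bsub>G\<^esub> t) (h t x) = h (inv\<^bsub>G\<^esub> t \<otimes>\<^bsub>G\<^esub> t) x" using comp[OF it t x] by simp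
  also have "\<dots> = x" unfolding l using e1(2)[OF xt] .
  finally show ?thesis .
qed

lemma uniq: assumes s: "s \<in> carrier G" and t: "t \<in> carrier G" and ys: "y \<in> Xs (inv\<^bsub>G\<^esub> s)"
  and yt: "y \<in> Xs (inv\<^bsub>G\<^esub> t)" and eq: "h s y = h t y"
  shows "s = t"
proof -
  have it: "inv\<^bsub>G\<^esub> t \<in> carrier G" using group.inv_closed[OF grp] t by auto
  have "h s y \<in> Xs (inv\<^bsub>G\<^esub> (inv\<^bsub>G\<^esub> t))" using eq hin[OF t yt] group.inv_inv[OF grp t] by simp
  note c = comp[OF it s ys this]
  have "h (inv\<^bsub>G\<^esub> t \<otimes>\<^bsub>G\<^esub> s) y = y" using c(2) eq backe[OF t yt] by simp
  moreover have "inv\<^bsub>G\<^esub> t \<otimes>\<^bsub>G\<^esub> s \<in> carrier G"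
    using monoid.m_closed[OF group.is_monoid[OF grp] it s] .
  ultimately have "inv\<^bsub>G\<^esub> t \<otimes>\<^bsub>G\<^esub> s = \<one>\<^bsub>G\<^esub>"
    using fr c(1) unfolding free_partial_action_def by blast
  then have "inv\<^bsub>G\<^esub> s = inv\<^bsub>G\<^esub> t" using group.inv_equality[OF grp] s it by blast
  then show ?thesis using group.inv_inv[OF grp s] group.inv_inv[OF grp t] by metis
qed

lemma R_eq: "orbit_rel G Xs h = {(x, h t x) | t x. t \<in> carrier G \<and> x \<in> Xs (inv\<^bsub>G\<^esub> t)}"
  unfolding orbit_rel_def ..

lemma R_equiv: "equiv (topspace X) (orbit_rel G Xs h)"
proof (rule equivI)
  show "orbit_rel G Xs h \<subseteq> topspace X \<times> topspace X"
    unfolding orbit_rel_def using sub hin group.inv_closed[OF grp] by blast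
  show "refl_on (topspace X) (orbit_rel G Xs h)"
  proof
    fix x assume x: "x \<in> topspace X"
    have o: "\<one>\<^bsub>G\<^esub> \<in> carrier G" "inv\<^bsub>G\<^esub> \<one>\<^bsub>G\<^esub> = \<one>\<^bsub>G\<^esub>"
      using grp by (auto simp: monoid.inv_one monoid.one_closed group.is_monoid)
    have "(x, h \<one>\<^bsub>G\<^esub> x) \<in> orbit_rel G Xs h" unfolding orbit_rel_def
      using o x e1(1) by auto
    then show "(x, x) \<in> orbit_rel G Xs h" using e1(2)[OF x] by simp
  qed
  show "sym (orbit_rel G Xs h)"
  proof
    fix x y assume "(x, y) \<in> orbit_rel G Xs h"
    then obtain t where t: "t \<in> carrier G" "x \<in> Xs (inv\<^bsub>G\<^esub> t)" "y = h t x"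
      unfolding orbit_rel_def by blast
    have it: "inv\<^bsub>G\<^esub> t \<in> carrier G" using group.inv_closed[OF grp] t by auto
    have "y \<in> Xs (inv\<^bsub>G\<^esub> (inv\<^bsub>G\<^esub> t))" using hin[OF t(1,2)] t(3) group.inv_inv[OF grp t(1)] by simp
    moreover have "x = h (inv\<^bsub>G\<^esub> t) y" using backe[OF t(1,2)] t(3) by simp
    ultimately show "(y, x) \<in> orbit_rel G Xs h" unfolding orbit_rel_def using it by blast
  qed
  show "trans (orbit_rel G Xs h)"
  proof
    fix x y z assume "(x, y) \<in> orbit_rel G Xs h" "(y, z) \<in> orbit_rel G Xs h"
    then obtain t s where t: "t \<in> carrier G" "x \<in> Xs (inv\<^bsub>G\<^esub> t)" "y = h t x"
      and s: "s \<in> carrier G" "y \<in> Xs (inv\<^bsub>G\<^esub> s)" "z = h s y"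
      unfolding orbit_rel_def by blast
    note c = comp[OF s(1) t(1) t(2) s(2)[unfolded t(3)]]
    have "s \<otimes>\<^bsub>G\<^esub> t \<in> carrier G" using monoid.m_closed[OF group.is_monoid[OF grp] s(1) t(1)] .
    then show "(x, z) \<in> orbit_rel G Xs h" unfolding orbit_rel_def using c s(3) t(3) by blast
  qed
qed

end

lemma openin_prod_discrete:
  "openin (prod_topology X (discrete_topology D)) S \<longleftrightarrow>
     S \<subseteq> topspace X \<times> D \<and> (\<forall>s\<in>D. openin X {y. (y,s) \<in> S})"
proof
  assume S: "openin (prod_topology X (discrete_topology D)) S"
  have sub: "S \<subseteq> topspace X \<times> D" using openin_subset[OF S] by simp
  have "openin X {y. (y,s) \<in> S}" if s: "s \<in> D" for s
  proof -
    have o1: "openin (discrete_topology D) {s}" using s by simp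
    have "openin (prod_topology X (discrete_topology D)) (topspace X \<times> {s})"
      using openin_prod_Times_iff o1 openin_topspace by metis
    then have "openin (prod_topology X (discrete_topology D)) (S \<inter> (topspace X \<times> {s}))"
      using S by (rule openin_Int[rotated])
    moreover have "S \<inter> (topspace X \<times> {s}) = {y. (y,s) \<in> S} \<times> {s}"
      using sub by blast
    ultimately have "openin (prod_topology X (discrete_topology D)) ({y. (y,s) \<in> S} \<times> {s})" by simp
    then show "openin X {y. (y,s) \<in> S}"
      by (metis openin_prod_Times_iff openin_empty insert_not_empty)
  qed
  then show "S \<subseteq> topspace X \<times> D \<and> (\<forall>s\<in>D. openin X {y. (y,s) \<in> S})" using sub by blast
next
  assume A: "S \<subseteq> topspace X \<times> D \<and> (\<forall>s\<in>D. openin X {y. (y,s) \<in> S})"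
  have e: "S = \<Union>((\<lambda>s. {y. (y,s) \<in> S} \<times> {s}) ` D)" using A by blast
  have "openin (prod_topology X (discrete_topology D)) ({y. (y,s) \<in> S} \<times> {s})" if s: "s \<in> D" for s
  proof -
    have o1: "openin (discrete_topology D) {s}" using s by simp
    show ?thesis using openin_prod_Times_iff o1 A s by metis
  qed
  then have "openin (prod_topology X (discrete_topology D)) (\<Union>((\<lambda>s. {y. (y,s) \<in> S} \<times> {s}) ` D))"
    by (intro openin_Union) blast
  then show "openin (prod_topology X (discrete_topology D)) S" using e by simp
qed
context PA begin

lemma AD_open: "openin (prod_topology X (discrete_topology (carrier G))) (action_domain G Xs)"
proof -
  have "\<forall>s\<in>carrier G. {y. (y,s) \<in> action_domain G Xs} = Xs (inv\<^bsub>G\<^esub> s)"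
    unfolding action_domain_def by auto
  moreover have "action_domain G Xs \<subseteq> topspace X \<times> carrier G"
    unfolding action_domain_def using sub group.inv_closed[OF grp] by blast
  ultimately show ?thesis unfolding openin_prod_discrete
    using opn group.inv_closed[OF grp] by simp
qed

lemma istop_gen: "istopology (\<lambda>U. U \<subseteq> A \<and> openin T {p \<in> B. g p \<in> U})"
proof -
  have 1: "openin T {p \<in> B. g p \<in> S \<inter> U}" if "openin T {p\<in>B. g p \<in> S}" "openin T {p\<in>B. g p\<in>U}" for S U
  proof -
    have "{p \<in> B. g p \<in> S \<inter> U} = {p\<in>B. g p\<in>S} \<inter> {p\<in>B. g p\<in>U}" by auto
    then show ?thesis using that by auto
  qed
  have 2: "openin T {p \<in> B. g p \<in> \<Union>K}" if "\<forall>S\<in>K. openin T {p\<in>B. g p\<in>S}" for K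
  proof -
    have "{p \<in> B. g p \<in> \<Union>K} = \<Union>((\<lambda>S. {p\<in>B. g p\<in>S}) ` K)" by auto
    then show ?thesis using that by auto
  qed
  show ?thesis unfolding istopology_def
  proof (intro conjI allI impI ballI)
    fix S U assume a: "S \<subseteq> A \<and> openin T {p \<in> B. g p \<in> S}" "U \<subseteq> A \<and> openin T {p \<in> B. g p \<in> U}"
    show "S \<inter> U \<subseteq> A" using a by blast
    show "openin T {p \<in> B. g p \<in> S \<inter> U}" using a 1 by blast
  next
    fix K assume a: "\<forall>S\<in>K. S \<subseteq> A \<and> openin T {p \<in> B. g p \<in> S}"
    show "\<Union>K \<subseteq> A" using a by blast
    show "openin T {p \<in> B. g p \<in> \<Union>K}" using a 2 by blast
  qed
qed

lemma istop: "istopology (\<lambda>U.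
      U \<subseteq> orbit_rel G Xs h \<and>
      openin (subtopology (prod_topology X (discrete_topology (carrier G))) (action_domain G Xs))
             {p \<in> action_domain G Xs. (fst p, h (snd p) (fst p)) \<in> U})"
  by (rule istop_gen)

lemma TR_open0: "openin (orbit_rel_topology G X Xs h) W \<longleftrightarrow>
      W \<subseteq> orbit_rel G Xs h \<and>
      openin (subtopology (prod_topology X (discrete_topology (carrier G))) (action_domain G Xs))
             {p \<in> action_domain G Xs. (fst p, h (snd p) (fst p)) \<in> W}"
  unfolding orbit_rel_topology_def using topology_inverse'[OF istop] by simp

lemma TR_open: "openin (orbit_rel_topology G X Xs h) W \<longleftrightarrow>
      W \<subseteq> orbit_rel G Xs h \<and> (\<forall>s\<in>carrier G. openin X {y \<in> Xs (inv\<^bsub>G\<^esub> s). (y, h s y) \<in> W})"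
proof -
  have "openin (subtopology (prod_topology X (discrete_topology (carrier G))) (action_domain G Xs))
             {p \<in> action_domain G Xs. (fst p, h (snd p) (fst p)) \<in> W} \<longleftrightarrow>
        (\<forall>s\<in>carrier G. openin X {y \<in> Xs (inv\<^bsub>G\<^esub> s). (y, h s y) \<in> W})"
  proof -
    have "\<And>s. s \<in> carrier G \<Longrightarrow> {y. (y, s) \<in> {p \<in> action_domain G Xs. (fst p, h (snd p) (fst p)) \<in> W}} =
           {y \<in> Xs (inv\<^bsub>G\<^esub> s). (y, h s y) \<in> W}" unfolding action_domain_def by auto
    moreover have "{p \<in> action_domain G Xs. (fst p, h (snd p) (fst p)) \<in> W} \<subseteq> topspace X \<times> carrier G"
      unfolding action_domain_def using sub group.inv_closed[OF grp] by blast
    ultimately show ?thesis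
      unfolding openin_open_subtopology[OF AD_open] openin_prod_discrete by auto
  qed
  then show ?thesis unfolding TR_open0 by simp
qed

lemma TR_top: "topspace (orbit_rel_topology G X Xs h) = orbit_rel G Xs h"
proof
  show "topspace (orbit_rel_topology G X Xs h) \<subseteq> orbit_rel G Xs h"
    using TR_open[of "topspace (orbit_rel_topology G X Xs h)"] by simp
  have "openin (orbit_rel_topology G X Xs h) (orbit_rel G Xs h)"
  proof -
    have "\<And>s. s \<in> carrier G \<Longrightarrow> {y \<in> Xs (inv\<^bsub>G\<^esub> s). (y, h s y) \<in> orbit_rel G Xs h} = Xs (inv\<^bsub>G\<^esub> s)"
      unfolding orbit_rel_def by blast
    then show ?thesis unfolding TR_open using opn group.inv_closed[OF grp] by simp
  qed
  then show "orbit_rel G Xs h \<subseteq> topspace (orbit_rel_topology G X Xs h)"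
    by (simp add: openin_subset)
qed

lemma gr_slice: assumes t: "t \<in> carrier G" and s: "s \<in> carrier G" and V: "V \<subseteq> Xs (inv\<^bsub>G\<^esub> t)"
  shows "{y \<in> Xs (inv\<^bsub>G\<^esub> s). (y, h s y) \<in> (\<lambda>y. (y, h t y)) ` V} = (if s = t then V else {})"
proof (cases "s = t")
  case True
  then show ?thesis using V by auto
next
  case False
  have "y \<notin> Xs (inv\<^bsub>G\<^esub> s) \<or> (y, h s y) \<notin> (\<lambda>y. (y, h t y)) ` V" for y
  proof (rule ccontr)
    assume "\<not> ?thesis"
    then have "y \<in> Xs (inv\<^bsub>G\<^esub> s)" "y \<in> V" "h s y = h t y" by auto
    then show False using uniq[OF s t] V False by blast
  qed
  then show ?thesis using False by auto
qed

lemma gr_open: assumes t: "t \<in> carrier G" and V: "openin X V" "V \<subseteq> Xs (inv\<^bsub>G\<^esub> t)"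
  shows "openin (orbit_rel_topology G X Xs h) ((\<lambda>y. (y, h t y)) ` V)"
  unfolding TR_open
proof
  show "(\<lambda>y. (y, h t y)) ` V \<subseteq> orbit_rel G Xs h" unfolding orbit_rel_def using V(2) t by blast
  show "\<forall>s\<in>carrier G. openin X {y \<in> Xs (inv\<^bsub>G\<^esub> s). (y, h s y) \<in> (\<lambda>y. (y, h t y)) ` V}"
    using gr_slice[OF t _ V(2)] V(1) by simp
qed

lemma gr_cont: assumes t: "t \<in> carrier G"
  shows "continuous_map (subtopology X (Xs (inv\<^bsub>G\<^esub> t))) (orbit_rel_topology G X Xs h) (\<lambda>y. (y, h t y))"
  unfolding continuous_map
proof
  have it: "inv\<^bsub>G\<^esub> t \<in> carrier G" using group.inv_closed[OF grp] t by auto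
  show "(\<lambda>y. (y, h t y)) ` topspace (subtopology X (Xs (inv\<^bsub>G\<^esub> t))) \<subseteq> topspace (orbit_rel_topology G X Xs h)"
    unfolding TR_top orbit_rel_def using t by auto
  show "\<forall>U. openin (orbit_rel_topology G X Xs h) U \<longrightarrow>
        openin (subtopology X (Xs (inv\<^bsub>G\<^esub> t))) {x \<in> topspace (subtopology X (Xs (inv\<^bsub>G\<^esub> t))). (x, h t x) \<in> U}"
  proof (intro allI impI)
    fix U assume U: "openin (orbit_rel_topology G X Xs h) U"
    have e: "{x \<in> topspace (subtopology X (Xs (inv\<^bsub>G\<^esub> t))). (x, h t x) \<in> U} = {y \<in> Xs (inv\<^bsub>G\<^esub> t). (y, h t y) \<in> U}"
      using sub[OF it] by auto
    show "openin (subtopology X (Xs (inv\<^bsub>G\<^esub> t))) {x \<in> topspace (subtopology X (Xs (inv\<^bsub>G\<^esub> t))). (x, h t x) \<in> U}"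
      unfolding e openin_open_subtopology[OF opn[OF it]] using U t unfolding TR_open by blast
  qed
qed

lemma diag_open: "openin (orbit_rel_topology G X Xs h) {(x, x) | x. x \<in> topspace X}"
  unfolding TR_open
proof
  show "{(x, x) | x. x \<in> topspace X} \<subseteq> orbit_rel G Xs h"
    using R_equiv unfolding equiv_def refl_on_def by blast
  show "\<forall>s\<in>carrier G. openin X {y \<in> Xs (inv\<^bsub>G\<^esub> s). (y, h s y) \<in> {(x, x) | x. x \<in> topspace X}}"
  proof
    fix s assume s: "s \<in> carrier G"
    have one: "\<one>\<^bsub>G\<^esub> \<in> carrier G" "inv\<^bsub>G\<^esub> \<one>\<^bsub>G\<^esub> = \<one>\<^bsub>G\<^esub>"
      using grp by (auto simp: monoid.inv_one monoid.one_closed group.is_monoid)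
    show "openin X {y \<in> Xs (inv\<^bsub>G\<^esub> s). (y, h s y) \<in> {(x, x) | x. x \<in> topspace X}}"
    proof (cases "s = \<one>\<^bsub>G\<^esub>")
      case True
      have "{y \<in> Xs (inv\<^bsub>G\<^esub> s). (y, h s y) \<in> {(x, x) | x. x \<in> topspace X}} = topspace X"
        using True one e1 by auto
      then show ?thesis by simp
    next
      case False
      have "{y \<in> Xs (inv\<^bsub>G\<^esub> s). (y, h s y) \<in> {(x, x) | x. x \<in> topspace X}} = {}"
        using False fr s unfolding free_partial_action_def by auto
      then show ?thesis by (metis openin_empty)
    qed
  qed
qed

lemma etale_at: assumes p: "p \<in> orbit_rel G Xs h"
  shows "\<exists>U. openin (orbit_rel_topology G X Xs h) U \<and> p \<in> U \<and>
        openin X (fst ` U) \<and> homeomorphic_map (subtopology (orbit_rel_topology G X Xs h) U) (subtopology X (fst ` U)) fst \<and>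
        openin X (snd ` U) \<and> homeomorphic_map (subtopology (orbit_rel_topology G X Xs h) U) (subtopology X (snd ` U)) snd"
proof -
  obtain t x where t: "t \<in> carrier G" and x: "x \<in> Xs (inv\<^bsub>G\<^esub> t)" and pe: "p = (x, h t x)"
    using p unfolding orbit_rel_def by blast
  have it: "inv\<^bsub>G\<^esub> t \<in> carrier G" using group.inv_closed[OF grp] t by auto
  define A where "A = Xs (inv\<^bsub>G\<^esub> t)"
  define U where "U = (\<lambda>y. (y, h t y)) ` A"
  have AO: "openin X A" unfolding A_def using opn[OF it] .
  have UO: "openin (orbit_rel_topology G X Xs h) U" unfolding U_def A_def
    using gr_open[OF t opn[OF it]] by simp
  have pU: "p \<in> U" unfolding U_def A_def pe using x by blast
  have fU: "fst ` U = A" unfolding U_def by (simp add: image_image)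
  have sU: "snd ` U = Xs t" unfolding U_def A_def using img[OF t] by (simp add: image_image)
  have tU: "topspace (subtopology (orbit_rel_topology G X Xs h) U) = U"
    using openin_subset[OF UO] by auto
  have tA: "topspace (subtopology X A) = A" using openin_subset[OF AO] by auto
  have hf: "homeomorphic_map (subtopology (orbit_rel_topology G X Xs h) U) (subtopology X A) fst"
  proof (rule bijective_open_imp_homeomorphic_map)
    show "continuous_map (subtopology (orbit_rel_topology G X Xs h) U) (subtopology X A) fst"
      unfolding continuous_map tU tA
    proof
      show "fst ` U \<subseteq> A" using fU by simp
      show "\<forall>V. openin (subtopology X A) V \<longrightarrow> openin (subtopology (orbit_rel_topology G X Xs h) U) {p \<in> U. fst p \<in> V}"
      proof (intro allI impI)
        fix V assume "openin (subtopology X A) V"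
        then have V: "openin X V" "V \<subseteq> A" using openin_open_subtopology[OF AO] by auto
        have e: "{p \<in> U. fst p \<in> V} = (\<lambda>y. (y, h t y)) ` V" unfolding U_def using V(2) by auto
        show "openin (subtopology (orbit_rel_topology G X Xs h) U) {p \<in> U. fst p \<in> V}"
          unfolding openin_open_subtopology[OF UO] e using gr_open[OF t V(1)] V(2) unfolding A_def U_def by blast
      qed
    qed
    show "open_map (subtopology (orbit_rel_topology G X Xs h) U) (subtopology X A) fst"
      unfolding open_map_def
    proof (intro allI impI)
      fix W assume "openin (subtopology (orbit_rel_topology G X Xs h) U) W"
      then have W: "openin (orbit_rel_topology G X Xs h) W" "W \<subseteq> U" using openin_open_subtopology[OF UO] by auto
      have e: "fst ` W = {y \<in> Xs (inv\<^bsub>G\<^esub> t). (y, h t y) \<in> W}"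
        using W(2) unfolding U_def A_def by force
      have "openin X (fst ` W)" unfolding e using W(1) t unfolding TR_open by blast
      moreover have "fst ` W \<subseteq> A" using W(2) fU by blast
      ultimately show "openin (subtopology X A) (fst ` W)" using openin_open_subtopology[OF AO] by blast
    qed
    show "fst ` topspace (subtopology (orbit_rel_topology G X Xs h) U) = topspace (subtopology X A)"
      using tU tA fU by simp
    show "inj_on fst (topspace (subtopology (orbit_rel_topology G X Xs h) U))"
      unfolding tU U_def by (auto simp: inj_on_def)
  qed
  have "homeomorphic_map (subtopology (orbit_rel_topology G X Xs h) U) (subtopology X (Xs t)) (h t \<circ> fst)"
    using homeomorphic_map_compose[OF hf hom[OF t, folded A_def]] .
  then have hs: "homeomorphic_map (subtopology (orbit_rel_topology G X Xs h) U) (subtopology X (Xs t)) snd"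
    by (rule homeomorphic_map_eq) (auto simp: tU U_def)
  have "openin X (fst ` U)" using AO fU by simp
  moreover have "openin X (snd ` U)" using opn[OF t] sU by simp
  moreover have "homeomorphic_map (subtopology (orbit_rel_topology G X Xs h) U) (subtopology X (fst ` U)) fst"
    using hf fU by simp
  moreover have "homeomorphic_map (subtopology (orbit_rel_topology G X Xs h) U) (subtopology X (snd ` U)) snd"
    using hs sU by simp
  ultimately show ?thesis using UO pU by blast
qed

lemma sigma_R: assumes cG: "countable (carrier G)" and sc: "\<forall>t\<in>carrier G. sigma_compact_in X (Xs t)"
  shows "sigma_compact_in (orbit_rel_topology G X Xs h) (orbit_rel G Xs h)"
proof -
  have "\<exists>K::'g \<Rightarrow> nat \<Rightarrow> 'a set. \<forall>t\<in>carrier G. (\<forall>n. compactin X (K t n)) \<and> Xs t = (\<Union>n. K t n)"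
    using bchoice[OF sc[unfolded sigma_compact_in_def]] .
  then obtain K :: "'g \<Rightarrow> nat \<Rightarrow> 'a set" where K: "\<forall>t\<in>carrier G. (\<forall>n. compactin X (K t n)) \<and> Xs t = (\<Union>n. K t n)"
    by (elim exE)
  have Kc: "compactin X (K t n)" and Ks: "K t n \<subseteq> Xs t" if "t \<in> carrier G" for t n
    using K that by blast+
  define E where "E = carrier G \<times> (UNIV :: nat set)"
  have one: "\<one>\<^bsub>G\<^esub> \<in> carrier G" using grp by (auto simp: monoid.one_closed group.is_monoid)
  have En: "E \<noteq> {}" unfolding E_def using one by blast
  have Ec: "countable E" unfolding E_def using cG by simp
  define e where "e = from_nat_into E"
  have re: "range e = E" unfolding e_def using En Ec by (rule range_from_nat_into)
  have tG: "fst (e n) \<in> carrier G" for n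
  proof -
    have "e n \<in> E" using re by blast
    then show ?thesis unfolding E_def by (simp add: mem_Times_iff)
  qed
  have itG: "inv\<^bsub>G\<^esub> (fst (e n)) \<in> carrier G" for n using group.inv_closed[OF grp] tG by auto
  define C where "C n = (\<lambda>y. (y, h (fst (e n)) y)) ` K (inv\<^bsub>G\<^esub> (fst (e n))) (snd (e n))" for n
  have Cc: "compactin (orbit_rel_topology G X Xs h) (C n)" for n
  proof -
    have "compactin (subtopology X (Xs (inv\<^bsub>G\<^esub> (fst (e n))))) (K (inv\<^bsub>G\<^esub> (fst (e n))) (snd (e n)))"
      unfolding compactin_subtopology using Kc[OF itG] Ks[OF itG] by blast
    from image_compactin[OF this gr_cont[OF tG]] show ?thesis unfolding C_def .
  qed
  have CR: "C n \<subseteq> orbit_rel G Xs h" for n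
  proof
    fix q assume "q \<in> C n"
    then obtain y where y: "y \<in> K (inv\<^bsub>G\<^esub> (fst (e n))) (snd (e n))" and q: "q = (y, h (fst (e n)) y)"
      unfolding C_def by blast
    have "y \<in> Xs (inv\<^bsub>G\<^esub> (fst (e n)))" using Ks[OF itG] y by blast
    then show "q \<in> orbit_rel G Xs h" unfolding orbit_rel_def q using tG by blast
  qed
  have Req: "orbit_rel G Xs h = (\<Union>n. C n)"
  proof
    show "orbit_rel G Xs h \<subseteq> (\<Union>n. C n)"
    proof
      fix q assume "q \<in> orbit_rel G Xs h"
      then obtain t x where t: "t \<in> carrier G" and x: "x \<in> Xs (inv\<^bsub>G\<^esub> t)" and qe: "q = (x, h t x)"
        unfolding orbit_rel_def by blast
      have it: "inv\<^bsub>G\<^esub> t \<in> carrier G" using group.inv_closed[OF grp] t by auto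
      have "Xs (inv\<^bsub>G\<^esub> t) = (\<Union>n. K (inv\<^bsub>G\<^esub> t) n)" using K it by blast
      then obtain m where m: "x \<in> K (inv\<^bsub>G\<^esub> t) m" using x by blast
      have "(t, m) \<in> range e" using re t unfolding E_def by simp
      then obtain n where en: "e n = (t, m)" by (metis rangeE)
      have "q \<in> C n" unfolding C_def qe en using m by simp
      then show "q \<in> (\<Union>n. C n)" by blast
    qed
    show "(\<Union>n. C n) \<subseteq> orbit_rel G Xs h" using CR by blast
  qed
  show ?thesis unfolding sigma_compact_in_def
    by (rule exI[of _ C]) (simp add: Cc Req)
qed

end

theorem mainTheorem1:
  fixes G :: "('g, 'b) monoid_scheme" and X :: "'a topology"
    and Xs :: "'g \<Rightarrow> 'a set" and h :: "'g \<Rightarrow> 'a \<Rightarrow> 'a"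
  assumes "group G"
    and "countable (carrier G)"
    and "Hausdorff_space X"
    and "sigma_compact_in X (topspace X)"
    and "topological_partial_action G X Xs h"
    and "free_partial_action G Xs h"
    and "\<forall>t\<in>carrier G. sigma_compact_in X (Xs t)"
  shows "equiv (topspace X) (orbit_rel G Xs h) \<and>
         etale_equivalence_relation X (orbit_rel G Xs h) (orbit_rel_topology G X Xs h)"
proof -
  interpret PA G X Xs h using assms(1,5,6) by (rule PA.intro)
  show ?thesis unfolding etale_equivalence_relation_def
    apply (intro conjI R_equiv TR_top sigma_R[OF assms(2,7)] diag_open ballI)
    apply (erule etale_at)
    done
qed

end
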